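(* Let $K\ge1$, $V^{\mathrm c}>0$, and for each $k$ let $\alpha_k>0$ with $\sum_k\alpha_k=1$, $L_k>0$, $V_k^{\mathrm d}>0$, $R_k>0$. Define \[ \overline D_k(t_k,V_k^{\mathrm c})=\frac{L_k(t_kR_k+V_k^{\mathrm c})}{V_k^{\mathrm d}V_k^{\mathrm c}+t_kR_k(V_k^{\mathrm d}+V_k^{\mathrm c})} \] and consider \[ \min_{\{t_k,V_k^{\mathrm c}\}}\sum_{k=1}^K\alpha_k\overline D_k\quad\text{s.t.}\quad \sum_{k=1}^K t_k\le1,\ t_k\ge0,\quad \sum_{k=1}^K V_k^{\mathrm c}\le V^{\mathrm c},\ V_k^{\mathrm c}\ge0. \] Then the optimal solution $\{\overline t_k^*,\overline V_k^{\mathrm c*}\}$ is given by \[ \overline t_k^*=\frac{\overline V_k^{\mathrm c*}\left(\sqrt{\frac{\alpha_kL_kR_k}{\theta^*}}-V_k^{\mathrm d}\right)^+}{R_k(V_k^{\mathrm d}+\overline V_k^{\mathrm c*})},\qquad \overline V_k^{\mathrm c*}=\frac{\overline t_k^*R_k\left(\sqrt{\frac{\alpha_kL_k}{\omega^*}}-V_k^{\mathrm d}\right)^+}{\overline t_k^*R_k+V_k^{\mathrm d}},\qquad\forall k, \] where $(y)^+=\max\{y,0\}$ and $\theta^*,\omega^*$ are the optimal Lagrange multipliers associated with the constraints $\sum_k t_k\le1$ and $\sum_kV_k^{\mathrm c}\le V^{\mathrm c}$, respectively, which satisfy the active constraints $\sum_{k=1}^K\overline t_k^*=1$ and $\sum_{k=1}^K\overline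 V_k^{\mathrm c*}=V^{\mathrm c}$.
   Context: $\overline D_k$ is the end-to-end delay of device $k$ in the partial compression offloading model in the special scenario where the transmission delay of the locally compressed data is neglected, after choosing the locally compressed fraction optimally: $L_k$ raw bits, local compression speed $V_k^{\mathrm d}$, TDMA time fraction $t_k$, average channel rate $R_k$, edge compression speed $V_k^{\mathrm c}$ out of a total $V^{\mathrm c}$. *)

theory Defs
  imports Complex_Main
begin

text \<open>End-to-end delay of device k (partial compression offloading, transmission of
locally compressed data neglected, local fraction chosen optimally).
Parameters: L raw bits, Vd local compression speed, R average channel rate,
t TDMA time fraction, Vc edge compression speed.
The expression is 0/0 only at t R = 0 and Vc = 0; there we use its continuous
extension L / Vd (pure local compression), which is also its value whenever
exactly one of t, Vc is zero.\<close>

definition Dbar :: "real \<Rightarrow> real \<Rightarrow> real \<Rightarrow> real \<Rightarrow> real \<Rightarrow> real" where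
  "Dbar L Vd R t Vc =
     (let den = Vd * Vc + t * R * (Vd + Vc) in
      if den = 0 then L / Vd else L * (t * R + Vc) / den)"

definition pos_part :: "real \<Rightarrow> real" where
  "pos_part y = max y 0"

definition feasible :: "nat \<Rightarrow> real \<Rightarrow> (nat \<Rightarrow> real) \<Rightarrow> (nat \<Rightarrow> real) \<Rightarrow> bool" where
  "feasible K VC t Vc \<longleftrightarrow>
     (\<Sum>k<K. t k) \<le> 1 \<and> (\<forall>k<K. t k \<ge> 0) \<and>
     (\<Sum>k<K. Vc k) \<le> VC \<and> (\<forall>k<K. Vc k \<ge> 0)"

definition objective :: "nat \<Rightarrow> (nat \<Rightarrow> real) \<Rightarrow> (nat \<Rightarrow> real) \<Rightarrow> (nat \<Rightarrow> real)
    \<Rightarrow> (nat \<Rightarrow> real) \<Rightarrow> (nat \<Rightarrow> real) \<Rightarrow> (nat \<Rightarrow> real) \<Rightarrow> real" where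
  "objective K \<alpha> L Vd R t Vc = (\<Sum>k<K. \<alpha> k * Dbar (L k) (Vd k) (R k) (t k) (Vc k))"

definition optimal :: "nat \<Rightarrow> real \<Rightarrow> (nat \<Rightarrow> real) \<Rightarrow> (nat \<Rightarrow> real) \<Rightarrow> (nat \<Rightarrow> real)
    \<Rightarrow> (nat \<Rightarrow> real) \<Rightarrow> (nat \<Rightarrow> real) \<Rightarrow> (nat \<Rightarrow> real) \<Rightarrow> bool" where
  "optimal K VC \<alpha> L Vd R t Vc \<longleftrightarrow>
     feasible K VC t Vc \<and>
     (\<forall>t' Vc'. feasible K VC t' Vc' \<longrightarrow>
        objective K \<alpha> L Vd R t Vc \<le> objective K \<alpha> L Vd R t' Vc')"

end

theory Submission imports Defs begin

definition Dc :: "real \<Rightarrow> real \<Rightarrow> real \<Rightarrow> real \<Rightarrow> real \<Rightarrow> real" where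
  "Dc L Vd R t V = L * (t * R + V) / (Vd * V + t * R * (Vd + V))"

lemma Dbar_eq:
  assumes "Vd > 0" "R > 0" "t \<ge> 0" "V \<ge> 0" "t > 0 \<or> V > 0"
  shows "Dbar L Vd R t V = Dc L Vd R t V"
proof -
  have "Vd * V + t * R * (Vd + V) > 0"
    using assms by (smt (verit) mult_nonneg_nonneg mult_pos_pos)
  then show ?thesis unfolding Dbar_def Dc_def Let_def by simp
qed

lemma Dbar_zero:
  assumes "Vd > 0" "R > 0" "t \<ge> 0" "V \<ge> 0" "t = 0 \<or> V = 0"
  shows "Dbar L Vd R t V = L / Vd"
  using assms unfolding Dbar_def Let_def by (auto simp: field_simps)

lemma Dc_strict_t:
  assumes "L > 0" "Vd > 0" "R > 0" "V > 0" "0 \<le> t" "t < t'"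
  shows "Dc L Vd R t' V < Dc L Vd R t V"
proof -
  have d1: "Vd * V + t * R * (Vd + V) > 0" using assms by (smt (verit) mult_nonneg_nonneg mult_pos_pos)
  have d2: "Vd * V + t' * R * (Vd + V) > 0" using assms by (smt (verit) mult_nonneg_nonneg mult_pos_pos)
  have "t * R * V * V < t' * R * V * V" using assms by simp
  hence "L * (t' * R + V) * (Vd * V + t * R * (Vd + V)) < L * (t * R + V) * (Vd * V + t' * R * (Vd + V))"
    using assms by (simp add: algebra_simps)
  thus ?thesis unfolding Dc_def using d1 d2 by (simp add: divide_simps)
qed

lemma Dc_strict_V:
  assumes "L > 0" "Vd > 0" "R > 0" "t > 0" "0 \<le> V" "V < V'"
  shows "Dc L Vd R t V' < Dc L Vd R t V"
proof -
  have d1: "Vd * V + t * R * (Vd + V) > 0" using assms by (smt (verit) mult_nonneg_nonneg mult_pos_pos)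
  have d2: "Vd * V' + t * R * (Vd + V') > 0" using assms by (smt (verit) mult_nonneg_nonneg mult_pos_pos)
  have "(t * R) * (t * R) * V < (t * R) * (t * R) * V'" using assms by simp
  hence "L * (t * R + V') * (Vd * V + t * R * (Vd + V)) < L * (t * R + V) * (Vd * V' + t * R * (Vd + V'))"
    using assms by (simp add: algebra_simps)
  thus ?thesis unfolding Dc_def using d1 d2 by (simp add: divide_simps)
qed

lemma Dc_V0: assumes "Vd > 0" "R > 0" "t > 0" shows "Dc L Vd R t 0 = L / Vd"
  using assms unfolding Dc_def by (simp add: field_simps)

lemma deriv_t:
  assumes "Vd > 0" "R > 0" "V > 0" "t \<ge> 0"
  shows "((\<lambda>s. Dc L Vd R s V) has_real_derivative
     (- L * R * V^2 / (Vd * V + t * R * (Vd + V))^2)) (at t)"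
proof -
  have d1: "Vd * V + t * R * (Vd + V) \<noteq> 0" using assms by (smt (verit) mult_nonneg_nonneg mult_pos_pos)
  show ?thesis unfolding Dc_def
    apply (rule derivative_eq_intros refl | simp add: d1)+
    using d1 by (simp add: field_simps power2_eq_square)
qed

lemma deriv_V:
  assumes "Vd > 0" "R > 0" "t > 0" "V \<ge> 0"
  shows "((\<lambda>s. Dc L Vd R t s) has_real_derivative
     (- L * (t * R)^2 / (Vd * V + t * R * (Vd + V))^2)) (at V)"
proof -
  have d1: "Vd * V + t * R * (Vd + V) \<noteq> 0" using assms by (smt (verit) mult_nonneg_nonneg mult_pos_pos)
  show ?thesis unfolding Dc_def
    apply (rule derivative_eq_intros refl | simp add: d1)+
    using d1 by (simp add: field_simps power2_eq_square)
qed

lemma sum_upd1: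
  fixes F :: "'i \<Rightarrow> 'b \<Rightarrow> 'c::ab_group_add"
  assumes "finite A" "k \<in> A"
  shows "(\<Sum>i\<in>A. F i ((g(k:=a)) i)) = (\<Sum>i\<in>A. F i (g i)) - F k (g k) + F k a"
proof -
  have "(\<Sum>i\<in>A. F i ((g(k:=a)) i)) = F k a + (\<Sum>i\<in>A-{k}. F i ((g(k:=a)) i))"
    using assms by (simp add: sum.remove)
  also have "(\<Sum>i\<in>A-{k}. F i ((g(k:=a)) i)) = (\<Sum>i\<in>A-{k}. F i (g i))"
    by (rule sum.cong) auto
  also have "\<dots> = (\<Sum>i\<in>A. F i (g i)) - F k (g k)"
    using assms by (simp add: sum.remove)
  finally show ?thesis by (simp add: algebra_simps)
qed

lemma sum_upd2:
  fixes F :: "'i \<Rightarrow> 'b \<Rightarrow> 'c::ab_group_add"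
  assumes "finite A" "k \<in> A" "j \<in> A" "k \<noteq> j"
  shows "(\<Sum>i\<in>A. F i ((g(k:=a, j:=b)) i)) = (\<Sum>i\<in>A. F i (g i)) - F k (g k) - F j (g j) + F k a + F j b"
proof -
  have "(\<Sum>i\<in>A. F i (((g(k:=a))(j:=b)) i)) = (\<Sum>i\<in>A. F i ((g(k:=a)) i)) - F j ((g(k:=a)) j) + F j b"
    using assms by (intro sum_upd1) auto
  also have "(\<Sum>i\<in>A. F i ((g(k:=a)) i)) = (\<Sum>i\<in>A. F i (g i)) - F k (g k) + F k a"
    using assms by (intro sum_upd1)
  finally show ?thesis using assms by (simp add: algebra_simps fun_upd_def)
qed

lemma formula_k:
  assumes a: "\<alpha> > 0" "L > 0" "Vd > 0" "R > 0" "t > 0" "V > 0"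
    and th: "\<theta> = \<alpha> * L * R * V^2 / (Vd * V + t * R * (Vd + V))^2"
    and om: "\<omega> = \<alpha> * L * (t * R)^2 / (Vd * V + t * R * (Vd + V))^2"
  shows "t = V * pos_part (sqrt (\<alpha> * L * R / \<theta>) - Vd) / (R * (Vd + V)) \<and>
         V = t * R * pos_part (sqrt (\<alpha> * L / \<omega>) - Vd) / (t * R + Vd)"
proof -
  define den where "den = Vd * V + t * R * (Vd + V)"
  have dp: "den > 0" unfolding den_def using a by (smt (verit) mult_nonneg_nonneg mult_pos_pos)
  have "\<alpha> * L * R / \<theta> = (den / V)^2" unfolding th den_def[symmetric] using a dp
    by (simp add: field_simps power2_eq_square)
  hence s1: "sqrt (\<alpha> * L * R / \<theta>) = den / V" using dp a by simp
  have "\<alpha> * L / \<omega> = (den / (t * R))^2" unfolding om den_def[symmetric] using a dp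
    by (simp add: field_simps power2_eq_square)
  hence s2: "sqrt (\<alpha> * L / \<omega>) = den / (t * R)" using dp a by simp
  have e1: "den / V - Vd = t * R * (Vd + V) / V" unfolding den_def using a by (simp add: field_simps)
  have e2: "den / (t * R) - Vd = V * (t * R + Vd) / (t * R)" unfolding den_def using a by (simp add: field_simps)
  have p1: "pos_part (den / V - Vd) = t * R * (Vd + V) / V" unfolding pos_part_def e1 using a by simp
  have p2: "pos_part (den / (t * R) - Vd) = V * (t * R + Vd) / (t * R)" unfolding pos_part_def e2 using a by simp
  have q1: "Vd + V > 0" "t * R + Vd > 0" using a by (auto simp: add_pos_pos)
  have r1: "V * (t * R * (Vd + V) / V) / (R * (Vd + V)) = t"
    using a q1 by simp
  have r2: "t * R * (V * (t * R + Vd) / (t * R)) / (t * R + Vd) = V"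
    using a q1 by simp
  show ?thesis unfolding s1 s2 p1 p2 r1 r2 by simp
qed

theorem theorem5:
  fixes K :: nat and VC :: real and \<alpha> L Vd R ts Vs :: "nat \<Rightarrow> real"
  assumes "K \<ge> 1" and "VC > 0"
    and "\<forall>k<K. \<alpha> k > 0" and "(\<Sum>k<K. \<alpha> k) = 1"
    and "\<forall>k<K. L k > 0" and "\<forall>k<K. Vd k > 0" and "\<forall>k<K. R k > 0"
    and "optimal K VC \<alpha> L Vd R ts Vs"
  shows "\<exists>\<theta> \<omega>. \<theta> > 0 \<and> \<omega> > 0 \<and>
     (\<forall>k<K.
        ts k = Vs k * pos_part (sqrt (\<alpha> k * L k * R k / \<theta>) - Vd k)
               / (R k * (Vd k + Vs k)) \<and>
        Vs k = ts k * R k * pos_part (sqrt (\<alpha> k * L k / \<omega>) - Vd k)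
               / (ts k * R k + Vd k)) \<and>
     (\<Sum>k<K. ts k) = 1 \<and> (\<Sum>k<K. Vs k) = VC"
proof -
  note K1 = assms(1) and VCp = assms(2)
  have ap: "\<And>k. k < K \<Longrightarrow> \<alpha> k > 0" and Lp: "\<And>k. k < K \<Longrightarrow> L k > 0"
    and Vdp: "\<And>k. k < K \<Longrightarrow> Vd k > 0" and Rp: "\<And>k. k < K \<Longrightarrow> R k > 0"
    using assms by auto
  have feas: "feasible K VC ts Vs" and opt: "\<And>t' V'. feasible K VC t' V' \<Longrightarrow>
      objective K \<alpha> L Vd R ts Vs \<le> objective K \<alpha> L Vd R t' V'"
    using assms(8) unfolding optimal_def by auto
  have st: "(\<Sum>k<K. ts k) \<le> 1" and tn: "\<And>k. k < K \<Longrightarrow> ts k \<ge> 0"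
    and sV: "(\<Sum>k<K. Vs k) \<le> VC" and Vn: "\<And>k. k < K \<Longrightarrow> Vs k \<ge> 0"
    using feas unfolding feasible_def by auto
  define Ft where "Ft = (\<lambda>i s. \<alpha> i * Dbar (L i) (Vd i) (R i) s (Vs i))"
  define FV where "FV = (\<lambda>i s. \<alpha> i * Dbar (L i) (Vd i) (R i) (ts i) s)"
  have objt: "\<And>t'. objective K \<alpha> L Vd R t' Vs = (\<Sum>i<K. Ft i (t' i))"
    unfolding objective_def Ft_def by simp
  have objV: "\<And>V'. objective K \<alpha> L Vd R ts V' = (\<Sum>i<K. FV i (V' i))"
    unfolding objective_def FV_def by simp
  define den where "den = (\<lambda>k. Vd k * Vs k + ts k * R k * (Vd k + Vs k))"
  define Mt where "Mt = (\<lambda>k. \<alpha> k * L k * R k * (Vs k)^2 / (den k)^2)"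
  define Mv where "Mv = (\<lambda>k. \<alpha> k * L k * (ts k * R k)^2 / (den k)^2)"
  obtain j0 where j0: "j0 < K" "ts j0 > 0" "Vs j0 > 0"
  proof (rule ccontr)
    assume nt: "\<not> thesis"
    note ob = that
    have none: "ts k = 0 \<or> Vs k = 0" if kK: "k < K" for k
    proof (rule ccontr)
      assume "\<not> (ts k = 0 \<or> Vs k = 0)"
      hence "ts k > 0" "Vs k > 0" using tn[OF kK] Vn[OF kK] by auto
      with ob[OF kK] nt show False by blast
    qed
    define t1 where "t1 = (\<lambda>i::nat. if i = 0 then (1::real) else 0)"
    define V1 where "V1 = (\<lambda>i::nat. if i = 0 then VC else 0)"
    have K0: "0 < K" using K1 by simp
    have "feasible K VC t1 V1" unfolding feasible_def t1_def V1_def using K0 VCp by auto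
    hence le: "objective K \<alpha> L Vd R ts Vs \<le> objective K \<alpha> L Vd R t1 V1" by (rule opt)
    have "objective K \<alpha> L Vd R t1 V1 < objective K \<alpha> L Vd R ts Vs"
      unfolding objective_def
    proof (rule sum_strict_mono_ex1)
      show "\<forall>x\<in>{..<K}. \<alpha> x * Dbar (L x) (Vd x) (R x) (t1 x) (V1 x)
          \<le> \<alpha> x * Dbar (L x) (Vd x) (R x) (ts x) (Vs x)"
      proof
        fix x assume x: "x \<in> {..<K}"
        hence xK: "x < K" by simp
        have e: "Dbar (L x) (Vd x) (R x) (ts x) (Vs x) = L x / Vd x"
          using none[OF xK] Vdp[OF xK] Rp[OF xK] tn[OF xK] Vn[OF xK] by (intro Dbar_zero) auto
        show "\<alpha> x * Dbar (L x) (Vd x) (R x) (t1 x) (V1 x)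
          \<le> \<alpha> x * Dbar (L x) (Vd x) (R x) (ts x) (Vs x)"
        proof (cases "x = 0")
          case True
          have "Dbar (L x) (Vd x) (R x) (t1 x) (V1 x) = Dc (L x) (Vd x) (R x) 1 VC"
            using True Vdp[OF xK] Rp[OF xK] VCp unfolding t1_def V1_def by (simp add: Dbar_eq)
          also have "\<dots> < Dc (L x) (Vd x) (R x) 1 0"
            using Lp[OF xK] Vdp[OF xK] Rp[OF xK] VCp by (intro Dc_strict_V) auto
          also have "\<dots> = L x / Vd x" using Vdp[OF xK] Rp[OF xK] by (intro Dc_V0) auto
          finally have "Dbar (L x) (Vd x) (R x) (t1 x) (V1 x) < L x / Vd x" .
          then show ?thesis unfolding e using ap[OF xK] by (intro mult_left_mono) auto
        next
          case False
          have "Dbar (L x) (Vd x) (R x) (t1 x) (V1 x) = L x / Vd x"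
            using False Vdp[OF xK] Rp[OF xK] unfolding t1_def V1_def by (simp add: Dbar_zero)
          then show ?thesis using e by simp
        qed
      qed
      show "\<exists>a\<in>{..<K}. \<alpha> a * Dbar (L a) (Vd a) (R a) (t1 a) (V1 a)
          < \<alpha> a * Dbar (L a) (Vd a) (R a) (ts a) (Vs a)"
      proof
        show "0 \<in> {..<K}" using K0 by simp
        have e: "Dbar (L 0) (Vd 0) (R 0) (ts 0) (Vs 0) = L 0 / Vd 0"
          using none[OF K0] Vdp[OF K0] Rp[OF K0] tn[OF K0] Vn[OF K0] by (intro Dbar_zero) auto
        have "Dbar (L 0) (Vd 0) (R 0) (t1 0) (V1 0) = Dc (L 0) (Vd 0) (R 0) 1 VC"
          using Vdp[OF K0] Rp[OF K0] VCp unfolding t1_def V1_def by (simp add: Dbar_eq)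
        also have "\<dots> < Dc (L 0) (Vd 0) (R 0) 1 0"
          using Lp[OF K0] Vdp[OF K0] Rp[OF K0] VCp by (intro Dc_strict_V) auto
        also have "\<dots> = L 0 / Vd 0" using Vdp[OF K0] Rp[OF K0] by (intro Dc_V0) auto
        finally show "\<alpha> 0 * Dbar (L 0) (Vd 0) (R 0) (t1 0) (V1 0)
          < \<alpha> 0 * Dbar (L 0) (Vd 0) (R 0) (ts 0) (Vs 0)" unfolding e using ap[OF K0] by (intro mult_strict_left_mono) auto
      qed
    qed simp
    with le show False by simp
  qed
  have Ftj0_lt: "\<And>s. s > ts j0 \<Longrightarrow> Ft j0 s < Ft j0 (ts j0)"
  proof -
    fix s assume s: "s > ts j0"
    have "Dbar (L j0) (Vd j0) (R j0) s (Vs j0) = Dc (L j0) (Vd j0) (R j0) s (Vs j0)"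
      using s j0 Vdp Rp by (intro Dbar_eq) auto
    also have "\<dots> < Dc (L j0) (Vd j0) (R j0) (ts j0) (Vs j0)"
      using s j0 Lp Vdp Rp by (intro Dc_strict_t) auto
    also have "\<dots> = Dbar (L j0) (Vd j0) (R j0) (ts j0) (Vs j0)"
      using j0 Vdp Rp by (intro Dbar_eq[symmetric]) auto
    finally show "Ft j0 s < Ft j0 (ts j0)" unfolding Ft_def using ap j0 by simp
  qed
  have FVj0_lt: "\<And>s. s > Vs j0 \<Longrightarrow> FV j0 s < FV j0 (Vs j0)"
  proof -
    fix s assume s: "s > Vs j0"
    have "Dbar (L j0) (Vd j0) (R j0) (ts j0) s = Dc (L j0) (Vd j0) (R j0) (ts j0) s"
      using s j0 Vdp Rp by (intro Dbar_eq) auto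
    also have "\<dots> < Dc (L j0) (Vd j0) (R j0) (ts j0) (Vs j0)"
      using s j0 Lp Vdp Rp by (intro Dc_strict_V) auto
    also have "\<dots> = Dbar (L j0) (Vd j0) (R j0) (ts j0) (Vs j0)"
      using j0 Vdp Rp by (intro Dbar_eq[symmetric]) auto
    finally show "FV j0 s < FV j0 (Vs j0)" unfolding FV_def using ap j0 by simp
  qed
  have sum_t: "(\<Sum>k<K. ts k) = 1"
  proof (rule ccontr)
    assume "(\<Sum>k<K. ts k) \<noteq> 1"
    with st have lt: "(\<Sum>k<K. ts k) < 1" by simp
    define sl where "sl = 1 - (\<Sum>k<K. ts k)"
    have slp: "sl > 0" using lt unfolding sl_def by simp
    define t' where "t' = ts(j0 := ts j0 + sl)"
    have "(\<Sum>k<K. t' k) = (\<Sum>k<K. ts k) - ts j0 + (ts j0 + sl)"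
      unfolding t'_def using sum_upd1[of "{..<K}" j0 "\<lambda>i s. s" ts "ts j0 + sl"] j0 by simp
    hence "(\<Sum>k<K. t' k) = 1" unfolding sl_def by simp
    hence "feasible K VC t' Vs" using feas slp j0 unfolding feasible_def t'_def by auto
    hence le: "objective K \<alpha> L Vd R ts Vs \<le> objective K \<alpha> L Vd R t' Vs" by (rule opt)
    have "objective K \<alpha> L Vd R t' Vs = objective K \<alpha> L Vd R ts Vs - Ft j0 (ts j0) + Ft j0 (ts j0 + sl)"
      unfolding objt t'_def using j0 by (intro sum_upd1) auto
    moreover have "Ft j0 (ts j0 + sl) < Ft j0 (ts j0)" using slp by (intro Ftj0_lt) simp
    ultimately show False using le by simp
  qed
  have sum_V: "(\<Sum>k<K. Vs k) = VC"
  proof (rule ccontr)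
    assume "(\<Sum>k<K. Vs k) \<noteq> VC"
    with sV have lt: "(\<Sum>k<K. Vs k) < VC" by simp
    define sl where "sl = VC - (\<Sum>k<K. Vs k)"
    have slp: "sl > 0" using lt unfolding sl_def by simp
    define V' where "V' = Vs(j0 := Vs j0 + sl)"
    have "(\<Sum>k<K. V' k) = (\<Sum>k<K. Vs k) - Vs j0 + (Vs j0 + sl)"
      unfolding V'_def using sum_upd1[of "{..<K}" j0 "\<lambda>i s. s" Vs "Vs j0 + sl"] j0 by simp
    hence "(\<Sum>k<K. V' k) = VC" unfolding sl_def by simp
    hence "feasible K VC ts V'" using feas slp j0 unfolding feasible_def V'_def by auto
    hence le: "objective K \<alpha> L Vd R ts Vs \<le> objective K \<alpha> L Vd R ts V'" by (rule opt)
    have "objective K \<alpha> L Vd R ts V' = objective K \<alpha> L Vd R ts Vs - FV j0 (Vs j0) + FV j0 (Vs j0 + sl)"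
      unfolding objV V'_def using j0 by (intro sum_upd1) auto
    moreover have "FV j0 (Vs j0 + sl) < FV j0 (Vs j0)" using slp by (intro FVj0_lt) simp
    ultimately show False using le by simp
  qed
  have tV: "\<And>k. k < K \<Longrightarrow> ts k > 0 \<Longrightarrow> Vs k > 0"
  proof (rule ccontr)
    fix k assume k: "k < K" "ts k > 0" "\<not> Vs k > 0"
    hence V0: "Vs k = 0" using Vn[OF k(1)] by simp
    have kj: "k \<noteq> j0" using V0 j0 by auto
    define t' where "t' = ts(k := 0, j0 := ts j0 + ts k)"
    have "(\<Sum>i<K. t' i) = (\<Sum>i<K. ts i) - ts k - ts j0 + 0 + (ts j0 + ts k)"
      unfolding t'_def using j0 k kj by (intro sum_upd2) auto
    hence "(\<Sum>i<K. t' i) = 1" using sum_t by simp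
    hence "feasible K VC t' Vs" using feas k j0 unfolding feasible_def t'_def by auto
    hence le: "objective K \<alpha> L Vd R ts Vs \<le> objective K \<alpha> L Vd R t' Vs" by (rule opt)
    have "objective K \<alpha> L Vd R t' Vs = objective K \<alpha> L Vd R ts Vs - Ft k (ts k) - Ft j0 (ts j0)
        + Ft k 0 + Ft j0 (ts j0 + ts k)"
      unfolding objt t'_def using j0 k kj by (intro sum_upd2) auto
    moreover have "Ft k 0 = Ft k (ts k)" unfolding Ft_def
      using Dbar_zero[of "Vd k" "R k" 0 "Vs k" "L k"] Dbar_zero[of "Vd k" "R k" "ts k" "Vs k" "L k"]
        V0 k Vdp Rp by simp
    moreover have "Ft j0 (ts j0 + ts k) < Ft j0 (ts j0)" using k by (intro Ftj0_lt) simp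
    ultimately show False using le by simp
  qed
  have Vt: "\<And>k. k < K \<Longrightarrow> Vs k > 0 \<Longrightarrow> ts k > 0"
  proof (rule ccontr)
    fix k assume k: "k < K" "Vs k > 0" "\<not> ts k > 0"
    hence t0: "ts k = 0" using tn[OF k(1)] by simp
    have kj: "k \<noteq> j0" using t0 j0 by auto
    define V' where "V' = Vs(k := 0, j0 := Vs j0 + Vs k)"
    have "(\<Sum>i<K. V' i) = (\<Sum>i<K. Vs i) - Vs k - Vs j0 + 0 + (Vs j0 + Vs k)"
      unfolding V'_def using j0 k kj by (intro sum_upd2) auto
    hence "(\<Sum>i<K. V' i) = VC" using sum_V by simp
    hence "feasible K VC ts V'" using feas k j0 unfolding feasible_def V'_def by auto
    hence le: "objective K \<alpha> L Vd R ts Vs \<le> objective K \<alpha> L Vd R ts V'" by (rule opt)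
    have "objective K \<alpha> L Vd R ts V' = objective K \<alpha> L Vd R ts Vs - FV k (Vs k) - FV j0 (Vs j0)
        + FV k 0 + FV j0 (Vs j0 + Vs k)"
      unfolding objV V'_def using j0 k kj by (intro sum_upd2) auto
    moreover have "FV k 0 = FV k (Vs k)" unfolding FV_def
      using Dbar_zero[of "Vd k" "R k" "ts k" 0 "L k"] Dbar_zero[of "Vd k" "R k" "ts k" "Vs k" "L k"]
        t0 k Vdp Rp by simp
    moreover have "FV j0 (Vs j0 + Vs k) < FV j0 (Vs j0)" using k by (intro FVj0_lt) simp
    ultimately show False using le by simp
  qed
  \<comment> \<open>Step 4: first-order conditions\<close>
  have eqs: "Mt k = Mt j0 \<and> Mv k = Mv j0" if k: "k < K" "ts k > 0" "Vs k > 0" for k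
  proof (cases "k = j0")
    case True then show ?thesis by simp
  next
    case False
    note kj = False
    define d where "d = min (ts k) (ts j0)"
    have dp: "d > 0" unfolding d_def using k j0 by simp
    define \<psi> where "\<psi> = (\<lambda>e. \<alpha> k * Dc (L k) (Vd k) (R k) (ts k + e) (Vs k)
        + \<alpha> j0 * Dc (L j0) (Vd j0) (R j0) (ts j0 - e) (Vs j0))"
    have loc: "\<forall>e. \<bar>0 - e\<bar> < d \<longrightarrow> \<psi> 0 \<le> \<psi> e"
    proof (intro allI impI)
      fix e :: real assume e: "\<bar>0 - e\<bar> < d"
      have e1: "ts k + e > 0" "ts j0 - e > 0" using e unfolding d_def by auto
      define t' where "t' = ts(k := ts k + e, j0 := ts j0 - e)"
      have "(\<Sum>i<K. t' i) = (\<Sum>i<K. ts i) - ts k - ts j0 + (ts k + e) + (ts j0 - e)"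
        unfolding t'_def using j0 k kj by (intro sum_upd2) auto
      hence "(\<Sum>i<K. t' i) = 1" using sum_t by simp
      hence "feasible K VC t' Vs" using feas e1 unfolding feasible_def t'_def by auto
      hence le: "objective K \<alpha> L Vd R ts Vs \<le> objective K \<alpha> L Vd R t' Vs" by (rule opt)
      have "objective K \<alpha> L Vd R t' Vs = objective K \<alpha> L Vd R ts Vs - Ft k (ts k) - Ft j0 (ts j0)
          + Ft k (ts k + e) + Ft j0 (ts j0 - e)"
        unfolding objt t'_def using j0 k kj by (intro sum_upd2) auto
      moreover have "Ft k (ts k) + Ft j0 (ts j0) = \<psi> 0" unfolding Ft_def \<psi>_def
        using k j0 Vdp Rp by (simp add: Dbar_eq)
      moreover have "Ft k (ts k + e) + Ft j0 (ts j0 - e) = \<psi> e" unfolding Ft_def \<psi>_def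
        using k j0 Vdp Rp e1 by (simp add: Dbar_eq)
      ultimately show "\<psi> 0 \<le> \<psi> e" using le by simp
    qed
    define Dk where "Dk = - L k * R k * (Vs k)^2 / (den k)^2"
    define Dj where "Dj = - L j0 * R j0 * (Vs j0)^2 / (den j0)^2"
    have h1: "((\<lambda>e. Dc (L k) (Vd k) (R k) (ts k + e) (Vs k)) has_real_derivative Dk * 1) (at 0)"
    proof (rule DERIV_chain2[where f = "\<lambda>s. Dc (L k) (Vd k) (R k) s (Vs k)" and g = "\<lambda>e. ts k + e"])
      show "((\<lambda>s. Dc (L k) (Vd k) (R k) s (Vs k)) has_real_derivative Dk) (at (ts k + 0))"
        unfolding Dk_def den_def using deriv_t[of "Vd k" "R k" "Vs k" "ts k" "L k"] k Vdp Rp by simp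
      show "((\<lambda>e. ts k + e) has_real_derivative 1) (at 0)"
        by (rule derivative_eq_intros refl | simp)+
    qed
    have h2: "((\<lambda>e. Dc (L j0) (Vd j0) (R j0) (ts j0 - e) (Vs j0)) has_real_derivative Dj * (-1)) (at 0)"
    proof (rule DERIV_chain2[where f = "\<lambda>s. Dc (L j0) (Vd j0) (R j0) s (Vs j0)" and g = "\<lambda>e. ts j0 - e"])
      show "((\<lambda>s. Dc (L j0) (Vd j0) (R j0) s (Vs j0)) has_real_derivative Dj) (at (ts j0 - 0))"
        unfolding Dj_def den_def using deriv_t[of "Vd j0" "R j0" "Vs j0" "ts j0" "L j0"] j0 Vdp Rp by simp
      show "((\<lambda>e. ts j0 - e) has_real_derivative -1) (at 0)"
        by (rule derivative_eq_intros refl | simp)+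
    qed
    have "(\<psi> has_real_derivative \<alpha> k * (Dk * 1) + \<alpha> j0 * (Dj * (-1))) (at 0)"
      unfolding \<psi>_def by (intro DERIV_add DERIV_cmult h1 h2)
    hence z: "\<alpha> k * (Dk * 1) + \<alpha> j0 * (Dj * (-1)) = 0" using dp loc by (rule DERIV_local_min)
    have mt: "Mt k = Mt j0" using z unfolding Mt_def Dk_def Dj_def by (simp add: field_simps)
    define d2 where "d2 = min (Vs k) (Vs j0)"
    have dp2: "d2 > 0" unfolding d2_def using k j0 by simp
    define \<phi> where "\<phi> = (\<lambda>e. \<alpha> k * Dc (L k) (Vd k) (R k) (ts k) (Vs k + e)
        + \<alpha> j0 * Dc (L j0) (Vd j0) (R j0) (ts j0) (Vs j0 - e))"
    have loc2: "\<forall>e. \<bar>0 - e\<bar> < d2 \<longrightarrow> \<phi> 0 \<le> \<phi> e"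
    proof (intro allI impI)
      fix e :: real assume e: "\<bar>0 - e\<bar> < d2"
      have e1: "Vs k + e > 0" "Vs j0 - e > 0" using e unfolding d2_def by auto
      define V' where "V' = Vs(k := Vs k + e, j0 := Vs j0 - e)"
      have "(\<Sum>i<K. V' i) = (\<Sum>i<K. Vs i) - Vs k - Vs j0 + (Vs k + e) + (Vs j0 - e)"
        unfolding V'_def using j0 k kj by (intro sum_upd2) auto
      hence "(\<Sum>i<K. V' i) = VC" using sum_V by simp
      hence "feasible K VC ts V'" using feas e1 unfolding feasible_def V'_def by auto
      hence le: "objective K \<alpha> L Vd R ts Vs \<le> objective K \<alpha> L Vd R ts V'" by (rule opt)
      have "objective K \<alpha> L Vd R ts V' = objective K \<alpha> L Vd R ts Vs - FV k (Vs k) - FV j0 (Vs j0)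
          + FV k (Vs k + e) + FV j0 (Vs j0 - e)"
        unfolding objV V'_def using j0 k kj by (intro sum_upd2) auto
      moreover have "FV k (Vs k) + FV j0 (Vs j0) = \<phi> 0" unfolding FV_def \<phi>_def
        using k j0 Vdp Rp by (simp add: Dbar_eq)
      moreover have "FV k (Vs k + e) + FV j0 (Vs j0 - e) = \<phi> e" unfolding FV_def \<phi>_def
        using k j0 Vdp Rp e1 by (simp add: Dbar_eq)
      ultimately show "\<phi> 0 \<le> \<phi> e" using le by simp
    qed
    define Ek where "Ek = - L k * (ts k * R k)^2 / (den k)^2"
    define Ej where "Ej = - L j0 * (ts j0 * R j0)^2 / (den j0)^2"
    have g1: "((\<lambda>e. Dc (L k) (Vd k) (R k) (ts k) (Vs k + e)) has_real_derivative Ek * 1) (at 0)"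
    proof (rule DERIV_chain2[where f = "\<lambda>s. Dc (L k) (Vd k) (R k) (ts k) s" and g = "\<lambda>e. Vs k + e"])
      show "((\<lambda>s. Dc (L k) (Vd k) (R k) (ts k) s) has_real_derivative Ek) (at (Vs k + 0))"
        unfolding Ek_def den_def using deriv_V[of "Vd k" "R k" "ts k" "Vs k" "L k"] k Vdp Rp by simp
      show "((\<lambda>e. Vs k + e) has_real_derivative 1) (at 0)"
        by (rule derivative_eq_intros refl | simp)+
    qed
    have g2: "((\<lambda>e. Dc (L j0) (Vd j0) (R j0) (ts j0) (Vs j0 - e)) has_real_derivative Ej * (-1)) (at 0)"
    proof (rule DERIV_chain2[where f = "\<lambda>s. Dc (L j0) (Vd j0) (R j0) (ts j0) s" and g = "\<lambda>e. Vs j0 - e"])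
      show "((\<lambda>s. Dc (L j0) (Vd j0) (R j0) (ts j0) s) has_real_derivative Ej) (at (Vs j0 - 0))"
        unfolding Ej_def den_def using deriv_V[of "Vd j0" "R j0" "ts j0" "Vs j0" "L j0"] j0 Vdp Rp by simp
      show "((\<lambda>e. Vs j0 - e) has_real_derivative -1) (at 0)"
        by (rule derivative_eq_intros refl | simp)+
    qed
    have "(\<phi> has_real_derivative \<alpha> k * (Ek * 1) + \<alpha> j0 * (Ej * (-1))) (at 0)"
      unfolding \<phi>_def by (intro DERIV_add DERIV_cmult g1 g2)
    hence z2: "\<alpha> k * (Ek * 1) + \<alpha> j0 * (Ej * (-1)) = 0" using dp2 loc2 by (rule DERIV_local_min)
    have mv: "Mv k = Mv j0" using z2 unfolding Mv_def Ek_def Ej_def by (simp add: field_simps)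
    show ?thesis using mt mv by simp
  qed
  have denp: "den j0 > 0" unfolding den_def using j0 Vdp Rp
    by (smt (verit) mult_nonneg_nonneg mult_pos_pos)
  have pos1: "Mt j0 > 0" unfolding Mt_def using denp j0 ap Lp Rp by simp
  have pos2: "Mv j0 > 0" unfolding Mv_def using denp j0 ap[OF j0(1)] Lp[OF j0(1)] Rp[OF j0(1)]
    by (intro divide_pos_pos mult_pos_pos) auto
  have per: "\<forall>k<K. ts k = Vs k * pos_part (sqrt (\<alpha> k * L k * R k / Mt j0) - Vd k) / (R k * (Vd k + Vs k)) \<and>
        Vs k = ts k * R k * pos_part (sqrt (\<alpha> k * L k / Mv j0) - Vd k) / (ts k * R k + Vd k)"
  proof (intro allI impI)
    fix k assume k: "k < K"
    show "ts k = Vs k * pos_part (sqrt (\<alpha> k * L k * R k / Mt j0) - Vd k) / (R k * (Vd k + Vs k)) \<and>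
        Vs k = ts k * R k * pos_part (sqrt (\<alpha> k * L k / Mv j0) - Vd k) / (ts k * R k + Vd k)"
    proof (cases "ts k > 0")
      case True
      hence V: "Vs k > 0" using tV k by simp
      from eqs[OF k True V] have "Mt j0 = Mt k" "Mv j0 = Mv k" by auto
      then show ?thesis using formula_k[of "\<alpha> k" "L k" "Vd k" "R k" "ts k" "Vs k" "Mt j0" "Mv j0"]
        True V k ap Lp Vdp Rp unfolding Mt_def Mv_def den_def by simp
    next
      case False
      hence t0: "ts k = 0" using tn[OF k] by simp
      hence "Vs k = 0" using Vt[OF k] Vn[OF k] by force
      then show ?thesis using t0 by simp
    qed
  qed
  show ?thesis using pos1 pos2 per sum_t sum_V by blast
qed

end
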